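(* Let $0<q<1$. For $0<m<1$ put $a=(1-m)/q$ and define the discrete measure $$W(m,du)=\sum_{n=0}^\infty w(m,q^n)\frac{q^n}{(q;q)_n}\delta_{q^n}(du),\qquad w(m,q^n)=a^n(aq;q)_\infty.$$ Then $W(m,\cdot)$ is a probability measure with mean $m$ and variance $(1-q)m(1-m)$, and for every $n\ge0$, with $u=q^n$, $$\widetilde{D}_{q,m}w(m,u)=\frac{u-m}{(1-q)m(1-m)}\,w(m,u),\qquad 0<m<1.$$
   Context: $(x;q)_n=\prod_{k=0}^{n-1}(1-xq^k)$, $(x;q)_\infty=\prod_{k\ge0}(1-xq^k)$. The Hahn operator centered at $1$ is $(\widetilde{D}_{q,x}f)(x)=\frac{f(x)-f(qx+1-q)}{(1-q)(x-1)}$ for $x\ne1$. $\delta_b$ is the unit point mass at $b$. *)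

theory Defs
  imports "HOL-Probability.Probability"
begin

definition qpoch :: "real \<Rightarrow> real \<Rightarrow> nat \<Rightarrow> real" where
  "qpoch x q n = (\<Prod>k<n. 1 - x * q ^ k)"

definition qpoch_inf :: "real \<Rightarrow> real \<Rightarrow> real" where
  "qpoch_inf x q = prodinf (\<lambda>k. 1 - x * q ^ k)"

definition hahnD :: "real \<Rightarrow> (real \<Rightarrow> real) \<Rightarrow> real \<Rightarrow> real" where
  "hahnD q f x = (f x - f (q * x + 1 - q)) / ((1 - q) * (x - 1))"

definition wq :: "real \<Rightarrow> real \<Rightarrow> nat \<Rightarrow> real" where
  "wq q m n = (let a = (1 - m) / q in a ^ n * qpoch_inf (a * q) q)"

definition Wmeas :: "real \<Rightarrow> real \<Rightarrow> real measure" where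
  "Wmeas q m = measure_of UNIV (sets borel)
     (\<lambda>A. \<Sum>n. ennreal (wq q m n * q ^ n / qpoch q q n) * indicator A (q ^ n))"

end

theory Submission
  imports Defs
begin

lemma qpoch_Suc: "qpoch x q (Suc n) = qpoch x q n * (1 - x * q ^ n)"
  unfolding qpoch_def by simp

lemma qpoch_qq_pos: assumes "0 < q" "q < 1" shows "qpoch q q n > 0"
  unfolding qpoch_def
proof (rule prod_pos)
  fix k assume "k \<in> {..<n}"
  have "q * q ^ k < 1" using assms
    using power_Suc_less_one[OF assms, of k] by simp
  then show "0 < 1 - q * q ^ k" by simp
qed

lemma summable_F:
  assumes q: "0 < q" "q < 1" and x: "0 \<le> x" "x < 1"
  shows "summable (\<lambda>n. x ^ n / qpoch q q n)"
proof -
  have "(\<lambda>n. q ^ n) \<longlonglongrightarrow> 0" using q by (intro LIMSEQ_power_zero) auto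
  moreover have "(1 - x) / 2 > 0" using x by auto
  ultimately have "eventually (\<lambda>n. q ^ n < (1 - x) / 2) sequentially"
    using order_tendstoD(2) by blast
  then obtain N where N: "\<And>n. n \<ge> N \<Longrightarrow> q ^ n < (1 - x) / 2"
    by (auto simp: eventually_sequentially)
  show ?thesis
  proof (rule summable_ratio_test[of "2 * x / (1 + x)" N])
    show "2 * x / (1 + x) < 1" using x by (simp add: field_simps)
    fix n assume "N \<le> n"
    have qn: "q * q ^ n \<le> q ^ n" using q by (simp add: mult_le_cancel_right1 less_imp_le)
    have qn': "q * q ^ n < (1 - x) / 2" using N[OF \<open>N \<le> n\<close>] qn by linarith
    have pos: "qpoch q q n > 0" using qpoch_qq_pos q by blast
    have d: "1 - q * q ^ n \<ge> (1 + x) / 2"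
      using qn' by (simp add: field_simps)
    have d0: "(1 + x) / 2 > 0" using x by simp
    have "x ^ Suc n / qpoch q q (Suc n) = (x ^ n / qpoch q q n) * (x / (1 - q * q ^ n))"
      by (simp add: qpoch_Suc)
    also have "\<dots> \<le> (x ^ n / qpoch q q n) * (2 * x / (1 + x))"
    proof (rule mult_left_mono)
      have "x / (1 - q * q ^ n) \<le> x / ((1 + x) / 2)"
        by (rule divide_left_mono[OF d x(1)]) (use d d0 in simp)
      also have "x / ((1 + x) / 2) = 2 * x / (1 + x)" by simp
      finally show "x / (1 - q * q ^ n) \<le> 2 * x / (1 + x)" .
      show "0 \<le> x ^ n / qpoch q q n" using pos x by simp
    qed
    finally show "norm (x ^ Suc n / qpoch q q (Suc n)) \<le> 2 * x / (1 + x) * norm (x ^ n / qpoch q q n)"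
      using pos x qpoch_qq_pos[OF q, of "Suc n"] by (simp add: mult.commute)
  qed
qed


definition FF :: "real \<Rightarrow> real \<Rightarrow> real" where
  "FF q y = (\<Sum>n. y ^ n / qpoch q q n)"

lemma FF_rec:
  assumes q: "0 < q" "q < 1" and y: "0 \<le> y" "y < 1"
  shows "FF q y * (1 - y) = FF q (q * y)"
proof -
  have qy: "0 \<le> q * y" "q * y < 1" using q y mult_left_le_one_le[of y q] by auto
  have s1: "(\<lambda>n. y ^ n / qpoch q q n) sums FF q y"
    unfolding FF_def using summable_F[OF q y] by (rule summable_sums)
  have s2: "(\<lambda>n. (q * y) ^ n / qpoch q q n) sums FF q (q * y)"
    unfolding FF_def using summable_F[OF q qy] by (rule summable_sums)
  define t where "t n = y ^ n / qpoch q q n - (q * y) ^ n / qpoch q q n" for n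
  have st: "t sums (FF q y - FF q (q * y))" unfolding t_def using sums_diff[OF s1 s2] .
  have t0: "t 0 = 0" by (simp add: t_def)
  have tS: "t (Suc n) = y * (y ^ n / qpoch q q n)" for n
  proof -
    have pos: "qpoch q q n > 0" using qpoch_qq_pos q by blast
    have ne: "1 - q * q ^ n \<noteq> 0" using power_Suc_less_one[OF q, of n] by simp
    have "t (Suc n) = y * y ^ n * (1 - q * q ^ n) / (qpoch q q n * (1 - q * q ^ n))"
      by (simp add: t_def qpoch_Suc power_mult_distrib diff_divide_distrib[symmetric] algebra_simps)
    also have "\<dots> = y * (y ^ n / qpoch q q n)" using ne pos by simp
    finally show ?thesis .
  qed
  have "(\<lambda>n. t (Suc n)) sums (FF q y - FF q (q * y))"
    using st t0 sums_Suc_iff[of t] by simp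
  moreover have "(\<lambda>n. t (Suc n)) sums (y * FF q y)"
    unfolding tS by (rule sums_mult[OF s1])
  ultimately have "FF q y - FF q (q * y) = y * FF q y" using sums_unique2 by blast
  then show ?thesis by (simp add: algebra_simps)
qed

lemma conv_prod_q:
  fixes x q :: real
  assumes q: "0 < q" "q < 1"
  shows "convergent_prod (\<lambda>k. 1 - x * q ^ k)"
proof -
  have "summable (\<lambda>k. \<bar>x\<bar> * q ^ k)" using q by (intro summable_mult summable_geometric) auto
  then have "summable (\<lambda>k. norm (1 - x * q ^ k - 1))" using q by (simp add: abs_mult)
  then show ?thesis by (intro abs_convergent_prod_imp_convergent_prod summable_imp_abs_convergent_prod)
qed

lemma qpoch_inf_rec:
  assumes q: "0 < q" "q < 1" and x: "x \<noteq> 1"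
  shows "qpoch_inf x q = (1 - x) * qpoch_inf (x * q) q"
proof -
  have "(\<Prod>n. 1 - x * q ^ Suc n) = qpoch_inf x q / (1 - x * q ^ 0)"
    unfolding qpoch_inf_def using conv_prod_q[OF q, of x] x by (intro prodinf_split_head) auto
  moreover have "(\<Prod>n. 1 - x * q ^ Suc n) = qpoch_inf (x * q) q"
    unfolding qpoch_inf_def by (simp add: algebra_simps)
  ultimately show ?thesis using x by (simp add: field_simps)
qed

lemma FF_euler:
  assumes q: "0 < q" "q < 1" and x: "0 \<le> x" "x < 1"
  shows "FF q x * qpoch_inf x q = 1"
proof -
  have qNx: "0 \<le> q ^ N * x" "q ^ N * x < 1" for N
  proof -
    show "0 \<le> q ^ N * x" using q x by simp
    have "q ^ N \<le> 1" using q by (simp add: power_le_one)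
    then have "q ^ N * x \<le> x" using x q mult_left_le_one_le[of x "q ^ N"] by simp
    then show "q ^ N * x < 1" using x by linarith
  qed
  have iter: "FF q x * (\<Prod>k<N. 1 - x * q ^ k) = FF q (q ^ N * x)" for N
  proof (induction N)
    case 0 then show ?case by simp
  next
    case (Suc N)
    have "FF q x * (\<Prod>k<Suc N. 1 - x * q ^ k) = FF q (q ^ N * x) * (1 - q ^ N * x)"
      using Suc by (simp add: algebra_simps)
    also have "\<dots> = FF q (q * (q ^ N * x))" using FF_rec[OF q qNx[of N]] .
    finally show ?case by (simp add: algebra_simps)
  qed
  define c where "c n = 1 / qpoch q q n" for n
  have FFc: "FF q y = (\<Sum>n. c n * y ^ n)" for y unfolding FF_def c_def by simp
  have "summable (\<lambda>n. c n * (1/2) ^ n)"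
    using summable_F[OF q, of "1/2"] unfolding c_def by simp
  then have cont: "isCont (FF q) 0" unfolding FFc by (rule isCont_powser) simp
  have "(\<lambda>N. q ^ N * x) \<longlonglongrightarrow> 0 * x" using q by (intro tendsto_mult LIMSEQ_power_zero) auto
  then have "(\<lambda>N. FF q (q ^ N * x)) \<longlonglongrightarrow> FF q 0"
    using cont isCont_tendsto_compose by fastforce
  moreover have "FF q 0 = 1" unfolding FFc powser_zero by (simp add: c_def qpoch_def)
  ultimately have l1: "(\<lambda>N. FF q x * (\<Prod>k<N. 1 - x * q ^ k)) \<longlonglongrightarrow> 1" unfolding iter by simp
  have "(\<lambda>N. \<Prod>k\<le>N. 1 - x * q ^ k) \<longlonglongrightarrow> qpoch_inf x q"
    unfolding qpoch_inf_def by (rule convergent_prod_LIMSEQ[OF conv_prod_q[OF q]])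
  then have "(\<lambda>N. \<Prod>k<Suc N. 1 - x * q ^ k) \<longlonglongrightarrow> qpoch_inf x q"
    by (simp add: lessThan_Suc_atMost)
  then have "(\<lambda>N. \<Prod>k<N. 1 - x * q ^ k) \<longlonglongrightarrow> qpoch_inf x q"
    by (rule LIMSEQ_imp_Suc)
  then have "(\<lambda>N. FF q x * (\<Prod>k<N. 1 - x * q ^ k)) \<longlonglongrightarrow> FF q x * qpoch_inf x q"
    by (intro tendsto_mult tendsto_const)
  then show ?thesis using l1 LIMSEQ_unique by blast
qed


lemma emeasure_W:
  assumes A: "A \<in> sets borel"
  shows "emeasure (distr (density (count_space UNIV) (\<lambda>n. ennreal (p n))) borel (\<lambda>n. (q::real) ^ n)) A
     = (\<Sum>n. ennreal (p n) * indicator A (q ^ n))"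
proof -
  let ?C = "density (count_space UNIV) (\<lambda>n. ennreal (p n))"
  have "emeasure (distr ?C borel (\<lambda>n. q ^ n)) A = emeasure ?C ((\<lambda>n. q ^ n) -` A \<inter> space ?C)"
    using A by (intro emeasure_distr) auto
  also have "\<dots> = (\<integral>\<^sup>+ n. ennreal (p n) * indicator ((\<lambda>n. q ^ n) -` A \<inter> space ?C) n \<partial>count_space UNIV)"
    by (intro emeasure_density) auto
  also have "\<dots> = (\<Sum>n. ennreal (p n) * indicator ((\<lambda>n. q ^ n) -` A \<inter> space ?C) n)"
    by (rule nn_integral_count_space_nat)
  also have "\<dots> = (\<Sum>n. ennreal (p n) * indicator A (q ^ n))"
    by (simp add: indicator_def)
  finally show ?thesis .
qed

lemma Wmeas_eq:
  "Wmeas q m = distr (density (count_space UNIV) (\<lambda>n. ennreal (wq q m n * q ^ n / qpoch q q n))) borel (\<lambda>n. q ^ n)"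
  (is "_ = ?D")
proof -
  have "Wmeas q m = measure_of UNIV (sets borel) (emeasure ?D)" unfolding Wmeas_def
  proof (rule measure_of_eq)
    show "sets borel \<subseteq> Pow UNIV" by simp
    fix A :: "real set" assume "A \<in> sigma_sets UNIV (sets borel)"
    then have A: "A \<in> sets borel" using sets.sigma_sets_eq[of borel] by (metis space_borel)
    show "(\<Sum>n. ennreal (wq q m n * q ^ n / qpoch q q n) * indicator A (q ^ n)) = emeasure ?D A"
      using emeasure_W[OF A] by simp
  qed
  also have "\<dots> = ?D" using measure_of_of_measure[of ?D] by simp
  finally show ?thesis .
qed

lemma integral_W:
  fixes g :: "real \<Rightarrow> real" and p :: "nat \<Rightarrow> real"
  assumes g: "g \<in> borel_measurable borel" and p: "\<And>n. p n \<ge> 0"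
    and s: "summable (\<lambda>n. p n * \<bar>g (q ^ n)\<bar>)"
  shows "integrable (distr (density (count_space UNIV) (\<lambda>n. ennreal (p n))) borel (\<lambda>n. q ^ n)) g
    \<and> integral\<^sup>L (distr (density (count_space UNIV) (\<lambda>n. ennreal (p n))) borel (\<lambda>n. q ^ n)) g
       = (\<Sum>n. p n * g (q ^ n))"
proof -
  let ?C = "density (count_space UNIV) (\<lambda>n. ennreal (p n))"
  have meas: "(\<lambda>n. q ^ n) \<in> measurable ?C borel" by simp
  have i1: "integrable (count_space UNIV) (\<lambda>n. p n *\<^sub>R g (q ^ n))"
    unfolding integrable_count_space_nat_iff using s p by (simp add: abs_mult)
  have i2: "integrable ?C (\<lambda>n. g (q ^ n))"
    using i1 by (subst integrable_density) (use p in auto)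
  have "integrable (distr ?C borel (\<lambda>n. q ^ n)) g"
    using i2 by (subst integrable_distr_eq[OF meas g])
  moreover have "integral\<^sup>L (distr ?C borel (\<lambda>n. q ^ n)) g = integral\<^sup>L ?C (\<lambda>n. g (q ^ n))"
    by (rule integral_distr[OF meas g])
  moreover have "integral\<^sup>L ?C (\<lambda>n. g (q ^ n)) = integral\<^sup>L (count_space UNIV) (\<lambda>n. p n *\<^sub>R g (q ^ n))"
    by (rule integral_density) (use p in auto)
  moreover have "\<dots> = (\<Sum>n. p n * g (q ^ n))"
    using integral_count_space_nat[OF i1] by simp
  ultimately show ?thesis by simp
qed


lemma hahn_alg:
  fixes X Q P m q :: real
  assumes "Q \<noteq> 0" "m \<noteq> 0" "m \<noteq> 1" "q \<noteq> 1"
  shows "(X / Q * P - X * (P / m)) / ((1 - q) * (m - 1)) = (Q - m) / ((1 - q) * m * (1 - m)) * (X / Q * P)"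
proof -
  have a: "1 - m \<noteq> 0" "m - 1 \<noteq> 0" "1 - q \<noteq> 0" using assms by auto
  have e1: "X / Q * P - X * (P / m) = - (X * P * (Q - m) / (Q * m))" using assms by (simp add: field_simps)
  have e2: "(m - 1) = - (1 - m)" by simp
  show ?thesis unfolding e1 e2 using assms a by (simp add: divide_simps) (simp add: algebra_simps)
qed

theorem mainTheorem16:
  fixes q m :: real
  assumes "0 < q" "q < 1" "0 < m" "m < 1"
  shows "prob_space (Wmeas q m)
    \<and> integrable (Wmeas q m) (\<lambda>x. x)
    \<and> (\<integral>x. x \<partial>Wmeas q m) = m
    \<and> integrable (Wmeas q m) (\<lambda>x. (x - m)\<^sup>2)
    \<and> (\<integral>x. (x - m)\<^sup>2 \<partial>Wmeas q m) = (1 - q) * m * (1 - m)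
    \<and> (\<forall>n::nat.
          hahnD q (\<lambda>t. wq q t n) m = (q ^ n - m) / ((1 - q) * m * (1 - m)) * wq q m n)"
proof -
  have q: "0 < q" "q < 1" and m: "0 < m" "m < 1" using assms by auto
  define x0 where "x0 = 1 - m"
  have x0: "0 < x0" "x0 < 1" using m by (auto simp: x0_def)
  define P where "P = qpoch_inf x0 q"
  have wq_eq: "wq q t n = ((1 - t) / q) ^ n * qpoch_inf (1 - t) q" for t n
    using q by (simp add: wq_def)
  have FP: "FF q x0 * P = 1" unfolding P_def using FF_euler[OF q] x0 by simp
  have "FF q x0 \<ge> 0" unfolding FF_def
    using x0 qpoch_qq_pos[OF q] summable_F[OF q, of x0]
    by (intro suminf_nonneg) (auto intro!: divide_nonneg_pos)
  have Ppos: "P > 0"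
  proof (rule ccontr)
    assume "\<not> P > 0"
    then have "FF q x0 * P \<le> 0" using \<open>FF q x0 \<ge> 0\<close> by (intro mult_nonneg_nonpos) auto
    then show False using FP by simp
  qed
  have "q * x0 \<le> x0" by (rule mult_left_le_one_le) (use q x0 in auto)
  then have x0q: "0 \<le> q * x0" "q * x0 < 1" using q x0 by (simp, linarith)
  have "q * (q * x0) \<le> q * x0" by (rule mult_left_le_one_le) (use q x0q in auto)
  then have x0qq: "0 \<le> q * (q * x0)" "q * (q * x0) < 1" using q x0q by (simp, linarith)
  define p where "p n = wq q m n * q ^ n / qpoch q q n" for n
  have p_eq: "p n = P * (x0 ^ n / qpoch q q n)" for n
    unfolding p_def wq_eq P_def x0_def using q by (simp add: power_divide)
  have p_nn: "p n \<ge> 0" for n unfolding p_eq using Ppos x0 qpoch_qq_pos[OF q, of n] by simp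
  have F1: "FF q (q * x0) = FF q x0 * (1 - x0)" using FF_rec[OF q] x0 by simp
  have F2: "FF q (q * (q * x0)) = FF q x0 * (1 - x0) * (1 - q * x0)" using FF_rec[OF q x0q] F1 by simp
  have S0: "p sums 1"
  proof -
    have "(\<lambda>n. P * (x0 ^ n / qpoch q q n)) sums (P * FF q x0)"
      unfolding FF_def using summable_F[OF q, of x0] x0 by (intro sums_mult summable_sums) auto
    then show ?thesis using FP unfolding p_eq by (simp add: mult.commute)
  qed
  have S1: "(\<lambda>n. p n * q ^ n) sums m"
  proof -
    have "(\<lambda>n. P * ((q * x0) ^ n / qpoch q q n)) sums (P * FF q (q * x0))"
      unfolding FF_def using summable_F[OF q x0q] by (intro sums_mult summable_sums) auto
    moreover have "P * FF q (q * x0) = m" using F1 FP by (simp add: x0_def algebra_simps)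
    moreover have "(\<lambda>n. P * ((q * x0) ^ n / qpoch q q n)) = (\<lambda>n. p n * q ^ n)"
      unfolding p_eq by (simp add: power_mult_distrib fun_eq_iff mult_ac)
    ultimately show ?thesis by simp
  qed
  have S2: "(\<lambda>n. p n * q ^ n * q ^ n) sums (m * (1 - q * (1 - m)))"
  proof -
    have "(\<lambda>n. P * ((q * (q * x0)) ^ n / qpoch q q n)) sums (P * FF q (q * (q * x0)))"
      unfolding FF_def using summable_F[OF q x0qq] by (intro sums_mult summable_sums) auto
    moreover have "P * FF q (q * (q * x0)) = m * (1 - q * (1 - m))"
    proof -
      have "P * FF q (q * (q * x0)) = (FF q x0 * P) * ((1 - x0) * (1 - q * x0))" using F2 by (simp add: mult_ac)
      also have "\<dots> = (1 - x0) * (1 - q * x0)" using FP by simp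
      also have "\<dots> = m * (1 - q * (1 - m))" by (simp add: x0_def)
      finally show ?thesis .
    qed
    moreover have "(\<lambda>n. P * ((q * (q * x0)) ^ n / qpoch q q n)) = (\<lambda>n. p n * q ^ n * q ^ n)"
      unfolding p_eq by (simp add: power_mult_distrib fun_eq_iff mult_ac)
    ultimately show ?thesis by simp
  qed
  have W: "Wmeas q m = distr (density (count_space UNIV) (\<lambda>n. ennreal (p n))) borel (\<lambda>n. q ^ n)"
    unfolding p_def by (rule Wmeas_eq)
  have prob: "prob_space (Wmeas q m)"
  proof (rule prob_spaceI)
    have "emeasure (Wmeas q m) (space (Wmeas q m)) = (\<Sum>n. ennreal (p n) * indicator UNIV (q ^ n))"
      unfolding W using emeasure_W[of UNIV p q] by simp
    also have "\<dots> = (\<Sum>n. ennreal (p n))" by simp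
    also have "\<dots> = ennreal (\<Sum>n. p n)" using S0 p_nn by (intro suminf_ennreal2) (auto simp: sums_iff)
    also have "\<dots> = 1" using S0 by (simp add: sums_iff)
    finally show "emeasure (Wmeas q m) (space (Wmeas q m)) = 1" .
  qed
  have I1: "integrable (Wmeas q m) (\<lambda>x. x) \<and> (\<integral>x. x \<partial>Wmeas q m) = (\<Sum>n. p n * q ^ n)"
    unfolding W using S1 p_nn q by (intro integral_W) (auto simp: sums_iff)
  have S3: "(\<lambda>n. p n * (q ^ n - m)\<^sup>2) sums ((1 - q) * m * (1 - m))"
  proof -
    have "(\<lambda>n. p n * q ^ n * q ^ n - 2 * m * (p n * q ^ n) + m\<^sup>2 * p n) sums
       (m * (1 - q * (1 - m)) - 2 * m * m + m\<^sup>2 * 1)"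
      by (intro sums_add sums_diff sums_mult S0 S1 S2)
    moreover have "m * (1 - q * (1 - m)) - 2 * m * m + m\<^sup>2 * 1 = (1 - q) * m * (1 - m)"
      by (simp add: algebra_simps power2_eq_square)
    moreover have "(\<lambda>n. p n * q ^ n * q ^ n - 2 * m * (p n * q ^ n) + m\<^sup>2 * p n) = (\<lambda>n. p n * (q ^ n - m)\<^sup>2)"
      by (simp add: algebra_simps power2_eq_square fun_eq_iff)
    ultimately show ?thesis by simp
  qed
  have I2: "integrable (Wmeas q m) (\<lambda>x. (x - m)\<^sup>2) \<and> (\<integral>x. (x - m)\<^sup>2 \<partial>Wmeas q m) = (\<Sum>n. p n * (q ^ n - m)\<^sup>2)"
    unfolding W using S3 p_nn by (intro integral_W) (auto simp: sums_iff)
  have H: "hahnD q (\<lambda>t. wq q t n) m = (q ^ n - m) / ((1 - q) * m * (1 - m)) * wq q m n" for n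
  proof -
    have t1: "1 - (q * m + 1 - q) = q * x0" by (simp add: x0_def algebra_simps)
    have Prec: "P = (1 - x0) * qpoch_inf (x0 * q) q" unfolding P_def using qpoch_inf_rec[OF q] x0 by simp
    have w1: "wq q (q * m + 1 - q) n = x0 ^ n * (P / m)"
      unfolding wq_eq t1 using q m Prec by (simp add: x0_def mult.commute)
    have w0: "wq q m n = x0 ^ n / q ^ n * P" unfolding wq_eq P_def x0_def by (simp add: power_divide)
    have qn: "q ^ n > 0" using q by simp
    show ?thesis unfolding hahnD_def w1 w0 using qn m q
      by (intro hahn_alg) auto
  qed
  show ?thesis using prob I1 I2 H S1 S3 by (simp add: sums_iff)
qed

end
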